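(* Let $m_1,m_2,m_3,m_4>0$, $M=m_1+m_2+m_3+m_4$. For $\mathbf{r}=(r_{12},r_{13},r_{14},r_{23},r_{24},r_{34})$ let $U(\mathbf{r})=\sum_{i<j}\frac{m_im_j}{r_{ij}}$, $I(\mathbf{r})=\frac{1}{2M}\sum_{i<j}m_im_jr_{ij}^2$, $P(\mathbf{r})=r_{12}r_{34}+r_{14}r_{23}-r_{13}r_{24}$, and $\mathcal{M}^+=\{\mathbf{r}\in[0,\infty)^6 : I(\mathbf{r})=1,\ P(\mathbf{r})=0\}$. If $\mathbf{r}^\ast\in\mathcal{M}^+$ is a critical point of the restriction $U|_{\mathcal{M}^+}$, then $\mathbf{r}^\ast$ is a nondegenerate local minimum point of $U|_{\mathcal{M}^+}$.
   Context: $U$ is $+\infty$ on the boundary of $\mathcal{M}^+$ (where some $r_{ij}=0$), so critical points lie in the part of $\mathcal{M}^+$ where all $r_{ij}>0$, which is a smooth 4-dimensional manifold. Equivalently, $\mathbf{r}^\ast$ is a critical point iff there exist Lagrange multipliers $\lambda,\sigma\in\mathbb{R}$ with $\nabla_{\mathbf{r}}\big(U+\lambda M(I-1)+\sigma P\big)(\mathbf{r}^\ast)=0$, i.e. $m_1m_2(r_{12}^{-3}-\lambda)=\sigma r_{34}/r_{12}$, $m_3m_4(r_{34}^{-3}-\lambda)=\sigma r_{12}/r_{34}$, $m_1m_3(r_{13}^{-3}-\lambda)=-\sigma r_{24}/r_{13}$, $m_2m_4(r_{24}^{-3}-\lambda)=-\sigma r_{13}/r_{24}$, $m_1m_4(r_{14}^{-3}-\lambda)=\sigma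 r_{23}/r_{14}$, $m_2m_3(r_{23}^{-3}-\lambda)=\sigma r_{14}/r_{23}$. *)

theory Defs
  imports "HOL-Analysis.Analysis"
begin

text \<open>Index set of the six mutual distances r12, r13, r14, r23, r24, r34.\<close>
datatype pr = P12 | P13 | P14 | P23 | P24 | P34

lemma UNIV_pr: "(UNIV :: pr set) = {P12, P13, P14, P23, P24, P34}"
  using pr.exhaust by auto

instance pr :: finite
  by standard (simp add: UNIV_pr)

fun fi :: "pr \<Rightarrow> nat" where
  "fi P12 = 1" | "fi P13 = 1" | "fi P14 = 1" | "fi P23 = 2" | "fi P24 = 2" | "fi P34 = 3"
fun fj :: "pr \<Rightarrow> nat" where
  "fj P12 = 2" | "fj P13 = 3" | "fj P14 = 4" | "fj P23 = 3" | "fj P24 = 4" | "fj P34 = 4"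

definition mm :: "(nat \<Rightarrow> real) \<Rightarrow> pr \<Rightarrow> real" where
  "mm m p = m (fi p) * m (fj p)"

definition Mtot :: "(nat \<Rightarrow> real) \<Rightarrow> real" where
  "Mtot m = m 1 + m 2 + m 3 + m 4"

definition Upot :: "(nat \<Rightarrow> real) \<Rightarrow> real ^ pr \<Rightarrow> real" where
  "Upot m r = (\<Sum>p\<in>UNIV. mm m p / r $ p)"

definition Imom :: "(nat \<Rightarrow> real) \<Rightarrow> real ^ pr \<Rightarrow> real" where
  "Imom m r = 1 / (2 * Mtot m) * (\<Sum>p\<in>UNIV. mm m p * (r $ p)^2)"

definition Pcay :: "real ^ pr \<Rightarrow> real" where
  "Pcay r = r$P12 * r$P34 + r$P14 * r$P23 - r$P13 * r$P24"

definition Mplus :: "(nat \<Rightarrow> real) \<Rightarrow> (real ^ pr) set" where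
  "Mplus m = {r. (\<forall>p. 0 \<le> r $ p) \<and> Imom m r = 1 \<and> Pcay r = 0}"

text \<open>Tangent space of M+ at a point with all r_ij > 0 (the constraints are regular there).\<close>
definition tangent :: "(nat \<Rightarrow> real) \<Rightarrow> real ^ pr \<Rightarrow> (real ^ pr) set" where
  "tangent m r = {v. frechet_derivative (Imom m) (at r) v = 0 \<and>
                     frechet_derivative Pcay (at r) v = 0}"

definition critical_point :: "(nat \<Rightarrow> real) \<Rightarrow> real ^ pr \<Rightarrow> bool" where
  "critical_point m r \<longleftrightarrow> r \<in> Mplus m \<and> (\<forall>p. 0 < r $ p) \<and>
     (\<forall>v\<in>tangent m r. frechet_derivative (Upot m) (at r) v = 0)"

definition Lagr :: "(nat \<Rightarrow> real) \<Rightarrow> real \<Rightarrow> real \<Rightarrow> real ^ pr \<Rightarrow> real" where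
  "Lagr m lam sig x = Upot m x + lam * Mtot m * (Imom m x - 1) + sig * Pcay x"

definition hess :: "(real ^ pr \<Rightarrow> real) \<Rightarrow> real ^ pr \<Rightarrow> real ^ pr \<Rightarrow> real ^ pr \<Rightarrow> real" where
  "hess f r v w = frechet_derivative (\<lambda>x. frechet_derivative f (at x) v) (at r) w"

text \<open>Nondegenerate local minimum of U restricted to M+: a local minimum of U on M+
  whose Hessian of the restriction (= Hessian of the Lagrangian, with the Lagrange
  multipliers of the critical point, restricted to the tangent space) is nondegenerate.\<close>
definition nondeg_local_min :: "(nat \<Rightarrow> real) \<Rightarrow> real ^ pr \<Rightarrow> bool" where
  "nondeg_local_min m r \<longleftrightarrow> r \<in> Mplus m \<and>
     (\<exists>e>0. \<forall>x\<in>Mplus m. dist x r < e \<longrightarrow> Upot m r \<le> Upot m x) \<and>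
     (\<exists>lam sig. frechet_derivative (Lagr m lam sig) (at r) = (\<lambda>v. 0) \<and>
        (\<forall>v\<in>tangent m r. (\<forall>w\<in>tangent m r. hess (Lagr m lam sig) r v w = 0) \<longrightarrow> v = 0))"

end

theory Submission
  imports Defs
begin
lemma span2:
  fixes g a b :: "'a::real_inner"
  assumes H: "\<And>v. inner a v = 0 \<Longrightarrow> inner b v = 0 \<Longrightarrow> inner g v = 0"
  shows "\<exists>\<alpha> \<beta>. g = \<alpha> *\<^sub>R a + \<beta> *\<^sub>R b"
proof -
  define b' where "b' = b - (inner a b / inner a a) *\<^sub>R a"
  define h where "h = g - (inner g a / inner a a) *\<^sub>R a - (inner g b' / inner b' b') *\<^sub>R b'"
  have ab': "inner a b' = 0"
    by (cases "a = 0") (auto simp: b'_def inner_diff_right)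
  have ah: "inner a h = 0"
    using ab' by (cases "a = 0") (auto simp: h_def inner_diff_right inner_commute)
  have bh': "inner b' h = 0"
    using ab' by (cases "b' = 0") (auto simp: h_def inner_diff_right inner_commute)
  have bh: "inner b h = 0"
  proof -
    have "b = b' + (inner a b / inner a a) *\<^sub>R a" by (simp add: b'_def)
    then have "inner b h = inner b' h + (inner a b / inner a a) * inner a h"
      by (metis inner_add_left inner_scaleR_left)
    with ah bh' show ?thesis by simp
  qed
  have gh: "inner g h = 0" using H[OF ah bh] .
  have "inner h h = inner g h - (inner g a / inner a a) * inner a h - (inner g b' / inner b' b') * inner b' h"
    by (simp add: h_def inner_diff_left)
  then have "inner h h = 0" using gh ah bh' by simp
  then have "h = 0" by simp
  then have "g = (inner g a / inner a a) *\<^sub>R a + (inner g b' / inner b' b') *\<^sub>R b'"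
    by (simp add: h_def algebra_simps)
  also have "\<dots> = (inner g a / inner a a - (inner g b' / inner b' b') * (inner a b / inner a a)) *\<^sub>R a
       + (inner g b' / inner b' b') *\<^sub>R b"
    by (simp add: b'_def algebra_simps)
  finally show ?thesis by blast
qed

lemma quad_nonneg:
  fixes p1 p2 s y1 y2 :: real
  assumes "p1 > 0" "4*p1*p2 \<ge> s^2"
  shows "p1*y1^2 + p2*y2^2 + s*y1*y2 \<ge> 0"
proof -
  have "4*p1*(p1*y1^2 + p2*y2^2 + s*y1*y2) = (2*p1*y1 + s*y2)^2 + (4*p1*p2 - s^2)*y2^2"
    by (simp add: algebra_simps power2_eq_square)
  also have "\<dots> \<ge> 0" using assms by simp
  finally show ?thesis using assms(1)
    by (simp add: zero_le_mult_iff)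
qed

lemma quad_pos:
  fixes p1 p2 s y1 y2 :: real
  assumes "p1 > 0" "4*p1*p2 > s^2" "p1*y1^2 + p2*y2^2 + s*y1*y2 \<le> 0"
  shows "y1 = 0 \<and> y2 = 0"
proof -
  have e: "4*p1*(p1*y1^2 + p2*y2^2 + s*y1*y2) = (2*p1*y1 + s*y2)^2 + (4*p1*p2 - s^2)*y2^2"
    by (simp add: algebra_simps power2_eq_square)
  have "4*p1*(p1*y1^2 + p2*y2^2 + s*y1*y2) \<le> 0" using assms by (simp add: mult_nonneg_nonpos)
  then have z: "(2*p1*y1 + s*y2)^2 + (4*p1*p2 - s^2)*y2^2 \<le> 0" using e by simp
  have "(4*p1*p2 - s^2)*y2^2 \<ge> 0" using assms by simp
  with z have "(4*p1*p2 - s^2)*y2^2 = 0" "(2*p1*y1 + s*y2)^2 = 0"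
    by (smt (verit) zero_le_power2)+
  then show ?thesis using assms by auto
qed

lemma blk1:
  fixes A B r1 r2 x1 x2 lam s :: real
  assumes A: "A > 0" and B: "B > 0" and r1: "r1 > 0" and r2: "r2 > 0"
    and x1: "0 < x1" "x1 < 2*r1" and x2: "0 < x2" "x2 < 2*r2" and lam: "lam \<ge> 0"
    and s1: "s*r2 = A/r1^2 - lam*A*r1" and s2: "s*r1 = B/r2^2 - lam*B*r2"
  shows "A*(x1-r1)^2*(1/(x1*r1^2)+lam/2) + B*(x2-r2)^2*(1/(x2*r2^2)+lam/2) + s*(x1-r1)*(x2-r2) \<ge> 0"
proof -
  define c1 where "c1 = 1/(x1*r1^2)+lam/2"
  define c2 where "c2 = 1/(x2*r2^2)+lam/2"
  have c1: "2*c1*r1 \<ge> 1/r1^2 + lam*r1"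
  proof -
    have "1/(x1*r1^2) \<ge> 1/(2*r1*r1^2)" using x1 r1 by (intro divide_left_mono) auto
    then have "2*r1*(1/(x1*r1^2)) \<ge> 1/r1^2" using r1
      by (simp add: field_simps power2_eq_square)
    then show ?thesis unfolding c1_def by (simp add: algebra_simps)
  qed
  have c2: "2*c2*r2 \<ge> 1/r2^2 + lam*r2"
  proof -
    have "1/(x2*r2^2) \<ge> 1/(2*r2*r2^2)" using x2 r2 by (intro divide_left_mono) auto
    then have "2*r2*(1/(x2*r2^2)) \<ge> 1/r2^2" using r2
      by (simp add: field_simps power2_eq_square)
    then show ?thesis unfolding c2_def by (simp add: algebra_simps)
  qed
  have q1: "1/r1^2 > 0" "lam*r1 \<ge> 0" using r1 lam by auto
  have q2: "1/r2^2 > 0" "lam*r2 \<ge> 0" using r2 lam by auto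
  have "(2*c1*r1)*(2*c2*r2) \<ge> (1/r1^2 + lam*r1)*(1/r2^2 + lam*r2)"
    using c1 c2 q1 q2 by (intro mult_mono) (linarith+)
  moreover have "(1/r1^2 + lam*r1)*(1/r2^2 + lam*r2) \<ge> (1/r1^2 - lam*r1)*(1/r2^2 - lam*r2)"
  proof -
    have "(1/r1^2 + lam*r1)*(1/r2^2 + lam*r2) - (1/r1^2 - lam*r1)*(1/r2^2 - lam*r2)
       = 2*((1/r1^2)*(lam*r2) + (lam*r1)*(1/r2^2))" by (simp add: algebra_simps)
    also have "\<dots> \<ge> 0" using q1 q2 by simp
    finally show ?thesis by simp
  qed
  ultimately have "(2*c1*r1)*(2*c2*r2) \<ge> (1/r1^2 - lam*r1)*(1/r2^2 - lam*r2)" by linarith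
  moreover have "(2*c1*r1)*(2*c2*r2) = 4*c1*c2*(r1*r2)" by simp
  ultimately have "4*c1*c2*(r1*r2) \<ge> (1/r1^2 - lam*r1)*(1/r2^2 - lam*r2)" by simp
  then have "A*B*(4*c1*c2*(r1*r2)) \<ge> A*B*((1/r1^2 - lam*r1)*(1/r2^2 - lam*r2))"
    using A B by (intro mult_left_mono) auto
  also have "A*B*((1/r1^2 - lam*r1)*(1/r2^2 - lam*r2)) = (s*r2)*(s*r1)"
    unfolding s1 s2 by (simp add: algebra_simps)
  finally have "(4*(A*c1)*(B*c2))*(r1*r2) \<ge> s^2*(r1*r2)" by (simp add: algebra_simps power2_eq_square)
  then have "4*(A*c1)*(B*c2) \<ge> s^2" using r1 r2 by (simp add: mult_le_cancel_right)
  moreover have "A*c1 > 0" using A x1 r1 lam unfolding c1_def by (simp add: add_pos_nonneg)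
  ultimately have "(A*c1)*(x1-r1)^2 + (B*c2)*(x2-r2)^2 + s*(x1-r1)*(x2-r2) \<ge> 0"
    using quad_nonneg by blast
  then show ?thesis unfolding c1_def c2_def by (simp add: algebra_simps)
qed

lemma blk2:
  fixes A B r1 r2 lam s v1 v2 :: real
  assumes A: "A > 0" and B: "B > 0" and r1: "r1 > 0" and r2: "r2 > 0" and lam: "lam \<ge> 0"
    and s1: "s*r2 = A/r1^2 - lam*A*r1" and s2: "s*r1 = B/r2^2 - lam*B*r2"
  shows "4*(A*(2/r1^3+lam))*(B*(2/r2^3+lam)) > 4 * s^2"
proof -
  have q1: "1/r1^2 > 0" "lam*r1 \<ge> 0" using r1 lam by auto
  have q2: "1/r2^2 > 0" "lam*r2 \<ge> 0" using r2 lam by auto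
  have e1: "(2/r1^3+lam)*r1 = 2*(1/r1^2) + lam*r1" using r1 by (simp add: field_simps power2_eq_square power3_eq_cube)
  have e2: "(2/r2^3+lam)*r2 = 2*(1/r2^2) + lam*r2" using r2 by (simp add: field_simps power2_eq_square power3_eq_cube)
  have "(2*(1/r1^2) + lam*r1)*(2*(1/r2^2) + lam*r2) > (1/r1^2 - lam*r1)*(1/r2^2 - lam*r2)"
  proof -
    have "(2*(1/r1^2) + lam*r1)*(2*(1/r2^2) + lam*r2) - (1/r1^2 - lam*r1)*(1/r2^2 - lam*r2)
      = 3*((1/r1^2)*(1/r2^2)) + 3*((1/r1^2)*(lam*r2) + (lam*r1)*(1/r2^2))"
      by (simp add: algebra_simps)
    also have "\<dots> > 0" using q1 q2 by (intro add_pos_nonneg) auto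
    finally show ?thesis by simp
  qed
  then have "A*B*((2/r1^3+lam)*r1*((2/r2^3+lam)*r2)) > A*B*((1/r1^2 - lam*r1)*(1/r2^2 - lam*r2))"
    unfolding e1 e2 using A B by simp
  also have "A*B*((1/r1^2 - lam*r1)*(1/r2^2 - lam*r2)) = (s*r2)*(s*r1)"
    unfolding s1 s2 by (simp add: algebra_simps)
  finally have "((A*(2/r1^3+lam))*(B*(2/r2^3+lam)))*(r1*r2) > s^2*(r1*r2)" by (simp add: algebra_simps power2_eq_square)
  then have "(A*(2/r1^3+lam))*(B*(2/r2^3+lam)) > s^2" using r1 r2 by (simp add: mult_less_cancel_right)
  then show ?thesis by simp
qed

lemma vec_nth_has_derivative[derivative_intros]:
  "((\<lambda>x::real^'n. x $ i) has_derivative (\<lambda>r. r $ i)) F"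
  by (rule bounded_linear_imp_has_derivative[OF bounded_linear_vec_nth])

lemma sum_pr: "(\<Sum>p\<in>UNIV. f p) = f P12 + f P13 + f P14 + f P23 + f P24 + f P34"
  by (simp add: UNIV_pr add.assoc)

lemma mm_simps: "mm m P12 = m 1 * m 2" "mm m P13 = m 1 * m 3" "mm m P14 = m 1 * m 4"
  "mm m P23 = m 2 * m 3" "mm m P24 = m 2 * m 4" "mm m P34 = m 3 * m 4"
  by (simp_all add: mm_def)

definition Pb :: "real^pr \<Rightarrow> real^pr \<Rightarrow> real" where
  "Pb x v = x $ P12 * v $ P34 + v $ P12 * x $ P34 + (x $ P14 * v $ P23 + v $ P14 * x $ P23) - (x $ P13 * v $ P24 + v $ P13 * x $ P24)"

definition hL :: "(nat \<Rightarrow> real) \<Rightarrow> real \<Rightarrow> real \<Rightarrow> real^pr \<Rightarrow> real^pr \<Rightarrow> real" where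
  "hL m lam sig x v = (\<Sum>p\<in>UNIV. (- mm m p / (x$p)^2 + lam * mm m p * x$p) * v$p) + sig * Pb x v"

definition hH :: "(nat \<Rightarrow> real) \<Rightarrow> real \<Rightarrow> real \<Rightarrow> real^pr \<Rightarrow> real^pr \<Rightarrow> real^pr \<Rightarrow> real" where
  "hH m lam sig x v w = (\<Sum>p\<in>UNIV. (2 * mm m p / (x$p)^3 + lam * mm m p) * w$p * v$p) + sig * Pb w v"

lemma dU:
  assumes "\<forall>p. x $ p \<noteq> 0"
  shows "(Upot m has_derivative (\<lambda>v. \<Sum>p\<in>UNIV. - mm m p / (x$p)^2 * v$p)) (at x)"
  unfolding Upot_def
  apply (rule has_derivative_eq_rhs)
   apply (rule derivative_intros | simp add: assms)+
  apply (rule ext, rule sum.cong, simp)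
  apply (simp add: assms field_simps power2_eq_square)
  done

lemma dI:
  shows "(Imom m has_derivative (\<lambda>v. 1 / (2 * Mtot m) * (\<Sum>p\<in>UNIV. mm m p * (2 * x$p * v$p)))) (at x)"
  unfolding Imom_def
  apply (rule has_derivative_mult_right)
  apply (rule has_derivative_eq_rhs)
   apply (rule derivative_intros)+
  apply (rule ext, rule sum.cong, simp)
  apply (simp add: field_simps power2_eq_square)
  done

lemma dP:
  shows "(Pcay has_derivative Pb x) (at x)"
  unfolding Pcay_def Pb_def[abs_def]
  by (auto intro!: derivative_eq_intros)

lemma dL:
  assumes "\<forall>p. x $ p \<noteq> 0" "Mtot m \<noteq> 0"
  shows "(Lagr m lam sig has_derivative hL m lam sig x) (at x)"
  unfolding Lagr_def[abs_def]
  apply (rule has_derivative_eq_rhs)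
   apply (rule derivative_intros dU[OF assms(1)] dI dP)+
  apply (rule ext)
  using assms(2) unfolding hL_def sum_pr
  apply (simp add: field_simps)
  done

lemma dH:
  assumes "\<forall>p. x $ p \<noteq> 0"
  shows "((\<lambda>y. hL m lam sig y v) has_derivative hH m lam sig x v) (at x)"
  unfolding hL_def[abs_def] hH_def[abs_def] Pb_def
  apply (rule has_derivative_eq_rhs)
   apply (rule derivative_intros | simp add: assms)+
  apply (rule ext)
  using assms unfolding sum_pr
  apply (simp add: field_simps power2_eq_square power3_eq_cube)
  done

fun bP :: "real^pr \<Rightarrow> pr \<Rightarrow> real" where
  "bP x P12 = x$P34" | "bP x P34 = x$P12" | "bP x P14 = x$P23" | "bP x P23 = x$P14"
| "bP x P13 = - x$P24" | "bP x P24 = - x$P13"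

lemma Pb_bP: "Pb x v = (\<Sum>p\<in>UNIV. bP x p * v$p)"
  by (simp add: sum_pr Pb_def algebra_simps)

lemma Pcay_bP: "(\<Sum>p\<in>UNIV. bP x p * x$p) = 2 * Pcay x"
  by (simp add: sum_pr Pcay_def algebra_simps)

lemma term_id:
  fixes A x r lam sig b :: real
  assumes x: "x \<noteq> 0" and r: "r \<noteq> 0" and E: "- A / r^2 + lam * A * r + sig * b = 0"
  shows "A/x - A/r + lam/2*(A*x^2 - A*r^2) = A*(x-r)^2*(1/(x*r^2)+lam/2) - sig*(b*(x-r))"
proof -
  have sb: "sig*b = A/r^2 - lam*A*r" using E by linarith
  have "sig*(b*(x-r)) = (sig*b)*(x-r)" by simp
  also have "\<dots> = (A/r^2 - lam*A*r)*(x-r)" by (simp add: sb)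
  finally have *: "sig*(b*(x-r)) = (A/r^2 - lam*A*r)*(x-r)" .
  show ?thesis unfolding * using x r
    by (simp add: field_simps power2_eq_square)
qed

lemma Pcay_expand: "Pcay x = Pcay r + Pb r (x - r) + Pcay (x - r)"
  by (simp add: Pcay_def Pb_def algebra_simps)

theorem proposition3:
  fixes m :: "nat \<Rightarrow> real" and r :: "real ^ pr"
  assumes "m 1 > 0" and "m 2 > 0" and "m 3 > 0" and "m 4 > 0"
    and "critical_point m r"
  shows "nondeg_local_min m r"
proof -
  from assms(5) have rM: "r \<in> Mplus m" and rpos: "\<forall>p. 0 < r$p"
    and crit: "\<forall>v\<in>tangent m r. frechet_derivative (Upot m) (at r) v = 0"
    unfolding critical_point_def by auto
  have rnz: "\<forall>p. r$p \<noteq> 0" using rpos by (metis less_irrefl)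
  have Ir: "Imom m r = 1" and Pr: "Pcay r = 0" using rM unfolding Mplus_def by auto
  have M: "Mtot m > 0" using assms unfolding Mtot_def by simp
  have mmpos: "mm m p > 0" for p using assms(1-4) by (cases p) (simp_all add: mm_def)
  have FU: "frechet_derivative (Upot m) (at r) = (\<lambda>v. \<Sum>p\<in>UNIV. - mm m p / (r$p)^2 * v$p)"
    using frechet_derivative_at[OF dU[OF rnz]] by simp
  have FI: "frechet_derivative (Imom m) (at r) = (\<lambda>v. 1 / (2 * Mtot m) * (\<Sum>p\<in>UNIV. mm m p * (2 * r$p * v$p)))"
    using frechet_derivative_at[OF dI] by simp
  have FP: "frechet_derivative Pcay (at r) = Pb r"
    using frechet_derivative_at[OF dP] by simp
  define gU :: "real^pr" where "gU = (\<chi> p. - mm m p / (r$p)^2)"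
  define gI :: "real^pr" where "gI = (\<chi> p. mm m p * r$p)"
  define gP :: "real^pr" where "gP = (\<chi> p. bP r p)"
  have "\<exists>\<alpha> \<beta>. gU = \<alpha> *\<^sub>R gI + \<beta> *\<^sub>R gP"
  proof (rule span2)
    fix v assume a1: "gI \<bullet> v = 0" and a2: "gP \<bullet> v = 0"
    have "(\<Sum>p\<in>UNIV. mm m p * (2 * r$p * v$p)) = 2 * (gI \<bullet> v)"
      unfolding gI_def inner_vec_def by (simp add: sum_distrib_left algebra_simps)
    moreover have "Pb r v = gP \<bullet> v"
      unfolding gP_def inner_vec_def Pb_bP by simp
    ultimately have "v \<in> tangent m r" using a1 a2 unfolding tangent_def FI FP by simp
    then have "(\<Sum>p\<in>UNIV. - mm m p / (r$p)^2 * v$p) = 0" using crit FU by simp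
    then show "gU \<bullet> v = 0" unfolding gU_def inner_vec_def by simp
  qed
  then obtain \<alpha> \<beta> where ab: "gU = \<alpha> *\<^sub>R gI + \<beta> *\<^sub>R gP" by blast
  define lam where "lam = - \<alpha>"
  define sig where "sig = - \<beta>"
  have E: "- mm m p / (r$p)^2 + lam * mm m p * r$p + sig * bP r p = 0" for p
  proof -
    have "gU $ p = \<alpha> * gI $ p + \<beta> * gP $ p" using ab by simp
    then show ?thesis unfolding gU_def gI_def gP_def lam_def sig_def by simp
  qed
  have lampos: "lam > 0"
  proof -
    have "- (mm m p / r$p) + lam * (mm m p * (r$p)^2) + sig * (bP r p * r$p) = 0" for p
    proof -
      have e1: "mm m p / r$p = (mm m p / (r$p)^2) * r$p" using rnz by (simp add: power2_eq_square)
      have e2: "mm m p / (r$p)^2 = lam * mm m p * r$p + sig * bP r p" using E[of p] by linarith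
      show ?thesis unfolding e1 e2 by (simp add: algebra_simps power2_eq_square)
    qed
    then have "(\<Sum>p\<in>UNIV. - (mm m p / r$p) + lam * (mm m p * (r$p)^2) + sig * (bP r p * r$p)) = 0"
      by simp
    then have "- Upot m r + lam * (\<Sum>p\<in>UNIV. mm m p * (r$p)^2) + sig * (2 * Pcay r) = 0"
      unfolding Upot_def Pcay_bP[symmetric] by (simp add: sum.distrib sum_distrib_left sum_negf sum_subtractf)
    moreover have "(\<Sum>p\<in>UNIV. mm m p * (r$p)^2) = 2 * Mtot m" using Ir M unfolding Imom_def
      by (simp add: field_simps)
    moreover have "Upot m r > 0" unfolding Upot_def
      using mmpos rpos by (intro sum_pos) auto
    ultimately have "lam * (2 * Mtot m) > 0" using Pr by simp
    then show ?thesis using M by (simp add: zero_less_mult_iff)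
  qed
  have Mnz: "Mtot m \<noteq> 0" using M by simp
  have DL0: "frechet_derivative (Lagr m lam sig) (at r) = (\<lambda>v. 0)"
  proof -
    have "frechet_derivative (Lagr m lam sig) (at r) = hL m lam sig r"
      using frechet_derivative_at[OF dL[OF rnz Mnz]] by simp
    moreover have "hL m lam sig r v = 0" for v
    proof -
      have "(- mm m p / (r$p)^2 + lam * mm m p * r$p) * v$p = - (sig * (bP r p * v$p))" for p
      proof -
        have "- mm m p / (r$p)^2 + lam * mm m p * r$p = - (sig * bP r p)" using E[of p] by linarith
        then show ?thesis by simp
      qed
      then show ?thesis unfolding hL_def Pb_bP by (simp add: sum_negf sum_distrib_left)
    qed
    ultimately show ?thesis by auto
  qed
  define e0 where "e0 = Min (range (\<lambda>p. r$p))"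
  have e0pos: "e0 > 0" unfolding e0_def using rpos by (subst Min_gr_iff) auto
  have e0le: "e0 \<le> r$p" for p unfolding e0_def by (rule Min_le) auto
  have near: "0 < x$p \<and> x$p < 2 * r$p" if "dist x r < e0" for x p
  proof -
    have "\<bar>(x - r)$p\<bar> \<le> norm (x - r)" by (rule component_le_norm_cart)
    then have "\<bar>x$p - r$p\<bar> < e0" using that by (simp add: dist_norm)
    then show ?thesis using e0le[of p] by linarith
  qed
  have locmin: "\<forall>x\<in>Mplus m. dist x r < e0 \<longrightarrow> Upot m r \<le> Upot m x"
  proof (intro ballI impI)
    fix x assume xM: "x \<in> Mplus m" and dx: "dist x r < e0"
    have Ix: "Imom m x = 1" and Px: "Pcay x = 0" using xM unfolding Mplus_def by auto
    have xpos: "0 < x$p" "x$p < 2 * r$p" for p using near[OF dx] by auto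
    have xnz: "x$p \<noteq> 0" for p using xpos(1)[of p] by simp
    have T: "mm m p / x$p - mm m p / r$p + lam/2*(mm m p * (x$p)^2 - mm m p * (r$p)^2)
       = mm m p * (x$p - r$p)^2 * (1/(x$p*(r$p)^2)+lam/2) - sig*(bP r p*(x$p - r$p))" for p
      by (rule term_id[OF xnz rnz[rule_format] E])
    have Sx: "(\<Sum>p\<in>UNIV. mm m p * (x$p)^2) = 2 * Mtot m" using Ix M unfolding Imom_def
      by (simp add: field_simps)
    have Sr: "(\<Sum>p\<in>UNIV. mm m p * (r$p)^2) = 2 * Mtot m" using Ir M unfolding Imom_def
      by (simp add: field_simps)
    have "(\<Sum>p\<in>UNIV. mm m p / x$p - mm m p / r$p + lam/2*(mm m p * (x$p)^2 - mm m p * (r$p)^2))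
       = (\<Sum>p\<in>UNIV. mm m p * (x$p - r$p)^2 * (1/(x$p*(r$p)^2)+lam/2) - sig*(bP r p*(x$p - r$p)))"
      using T by simp
    moreover have h1: "(\<Sum>p\<in>UNIV. mm m p / x$p - mm m p / r$p + lam/2*(mm m p * (x$p)^2 - mm m p * (r$p)^2))
       = Upot m x - Upot m r + (\<Sum>p\<in>UNIV. lam/2*(mm m p * (x$p)^2 - mm m p * (r$p)^2))"
      unfolding Upot_def by (simp add: sum.distrib sum_subtractf)
    moreover have h2: "(\<Sum>p\<in>UNIV. lam/2*(mm m p * (x$p)^2 - mm m p * (r$p)^2))
       = lam/2*((\<Sum>p\<in>UNIV. mm m p * (x$p)^2) - (\<Sum>p\<in>UNIV. mm m p * (r$p)^2))"
      by (simp only: sum_distrib_left[symmetric] sum_subtractf)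
    moreover have h3: "(\<Sum>p\<in>UNIV. mm m p * (x$p - r$p)^2 * (1/(x$p*(r$p)^2)+lam/2) - sig*(bP r p*(x$p - r$p)))
       = (\<Sum>p\<in>UNIV. mm m p * (x$p - r$p)^2 * (1/(x$p*(r$p)^2)+lam/2)) - sig * Pb r (x - r)"
      unfolding Pb_bP by (simp add: sum_subtractf sum_distrib_left)
    ultimately have "Upot m x - Upot m r + lam/2*((\<Sum>p\<in>UNIV. mm m p * (x$p)^2) - (\<Sum>p\<in>UNIV. mm m p * (r$p)^2))
       = (\<Sum>p\<in>UNIV. mm m p * (x$p - r$p)^2 * (1/(x$p*(r$p)^2)+lam/2)) - sig * Pb r (x - r)"
      by simp
    moreover have "Pb r (x - r) = - Pcay (x - r)" using Pcay_expand[of x r] Px Pr by linarith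
    ultimately have key: "Upot m x - Upot m r
       = (\<Sum>p\<in>UNIV. mm m p * (x$p - r$p)^2 * (1/(x$p*(r$p)^2)+lam/2)) + sig * Pcay (x - r)"
      using Sx Sr by simp
    have Es: "sig * bP r p = mm m p / (r$p)^2 - lam * mm m p * r$p" for p using E[of p] by linarith
    have B1: "mm m P12 * (x$P12 - r$P12)^2 * (1/(x$P12*(r$P12)^2)+lam/2)
       + mm m P34 * (x$P34 - r$P34)^2 * (1/(x$P34*(r$P34)^2)+lam/2)
       + sig * (x$P12 - r$P12) * (x$P34 - r$P34) \<ge> 0"
      by (rule blk1) (use mmpos rpos xpos lampos Es[of P12] Es[of P34] in \<open>auto simp: algebra_simps\<close>)
    have B2: "mm m P14 * (x$P14 - r$P14)^2 * (1/(x$P14*(r$P14)^2)+lam/2)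
       + mm m P23 * (x$P23 - r$P23)^2 * (1/(x$P23*(r$P23)^2)+lam/2)
       + sig * (x$P14 - r$P14) * (x$P23 - r$P23) \<ge> 0"
      by (rule blk1) (use mmpos rpos xpos lampos Es[of P14] Es[of P23] in \<open>auto simp: algebra_simps\<close>)
    have B3: "mm m P13 * (x$P13 - r$P13)^2 * (1/(x$P13*(r$P13)^2)+lam/2)
       + mm m P24 * (x$P24 - r$P24)^2 * (1/(x$P24*(r$P24)^2)+lam/2)
       + (- sig) * (x$P13 - r$P13) * (x$P24 - r$P24) \<ge> 0"
      by (rule blk1) (use mmpos rpos xpos lampos Es[of P13] Es[of P24] in \<open>auto simp: algebra_simps\<close>)
    have "Upot m x - Upot m r = 
       (mm m P12 * (x$P12 - r$P12)^2 * (1/(x$P12*(r$P12)^2)+lam/2)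
       + mm m P34 * (x$P34 - r$P34)^2 * (1/(x$P34*(r$P34)^2)+lam/2)
       + sig * (x$P12 - r$P12) * (x$P34 - r$P34))
      + (mm m P14 * (x$P14 - r$P14)^2 * (1/(x$P14*(r$P14)^2)+lam/2)
       + mm m P23 * (x$P23 - r$P23)^2 * (1/(x$P23*(r$P23)^2)+lam/2)
       + sig * (x$P14 - r$P14) * (x$P23 - r$P23))
      + (mm m P13 * (x$P13 - r$P13)^2 * (1/(x$P13*(r$P13)^2)+lam/2)
       + mm m P24 * (x$P24 - r$P24)^2 * (1/(x$P24*(r$P24)^2)+lam/2)
       + (- sig) * (x$P13 - r$P13) * (x$P24 - r$P24))"
      unfolding key sum_pr Pcay_def by (simp add: algebra_simps)
    then show "Upot m r \<le> Upot m x" using B1 B2 B3 by linarith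
  qed
  have hessH: "hess (Lagr m lam sig) r v w = hH m lam sig r v w" for v w
  proof -
    have "((\<lambda>y. frechet_derivative (Lagr m lam sig) (at y) v) has_derivative hH m lam sig r v) (at r within UNIV)"
    proof (rule has_derivative_transform_within[OF _ e0pos])
      show "((\<lambda>y. hL m lam sig y v) has_derivative hH m lam sig r v) (at r within UNIV)"
        using dH[OF rnz] by simp
      show "r \<in> UNIV" by simp
      fix y assume "dist y r < e0"
      then have "\<forall>p. y$p \<noteq> 0" using near by (metis less_irrefl)
      then show "hL m lam sig y v = frechet_derivative (Lagr m lam sig) (at y) v"
        using frechet_derivative_at[OF dL[OF _ Mnz]] by metis
    qed
    then show ?thesis unfolding hess_def using frechet_derivative_at by fastforce
  qed
  have Es: "sig * bP r p = mm m p / (r$p)^2 - lam * mm m p * r$p" for p using E[of p] by linarith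
  have lam0: "lam \<ge> 0" using lampos by simp
  have C1: "4 * (mm m P12 * (2/(r$P12)^3+lam)) * (mm m P34 * (2/(r$P34)^3+lam)) > (2 * sig)^2"
    using blk2[of "mm m P12" "mm m P34" "r$ P12" "r$ P34" lam sig] mmpos rpos lam0 Es[of P12] Es[of P34]
    by (simp add: algebra_simps power2_eq_square)
  have C2: "4 * (mm m P14 * (2/(r$P14)^3+lam)) * (mm m P23 * (2/(r$P23)^3+lam)) > (2 * sig)^2"
    using blk2[of "mm m P14" "mm m P23" "r$ P14" "r$ P23" lam sig] mmpos rpos lam0 Es[of P14] Es[of P23]
    by (simp add: algebra_simps power2_eq_square)
  have C3: "4 * (mm m P13 * (2/(r$P13)^3+lam)) * (mm m P24 * (2/(r$P24)^3+lam)) > (2 * (-sig))^2"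
    using blk2[of "mm m P13" "mm m P24" "r$ P13" "r$ P24" lam "-sig"] mmpos rpos lam0 Es[of P13] Es[of P24]
    by (simp add: algebra_simps power2_eq_square)
  have pp: "mm m p * (2/(r$p)^3+lam) > 0" for p using mmpos[of p] rpos lam0
    by (simp add: add_pos_nonneg)
  have nondeg: "\<forall>v\<in>tangent m r. (\<forall>w\<in>tangent m r. hess (Lagr m lam sig) r v w = 0) \<longrightarrow> v = 0"
  proof (intro ballI impI)
    fix v assume vt: "v \<in> tangent m r" and hv: "\<forall>w\<in>tangent m r. hess (Lagr m lam sig) r v w = 0"
    have "hH m lam sig r v v = 0" using hv vt hessH by simp
    moreover have "hH m lam sig r v v =
        ((mm m P12 * (2/(r$P12)^3+lam)) * (v$P12)^2 + (mm m P34 * (2/(r$P34)^3+lam)) * (v$P34)^2 + (2 * sig) * v$P12 * v$P34)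
      + ((mm m P14 * (2/(r$P14)^3+lam)) * (v$P14)^2 + (mm m P23 * (2/(r$P23)^3+lam)) * (v$P23)^2 + (2 * sig) * v$P14 * v$P23)
      + ((mm m P13 * (2/(r$P13)^3+lam)) * (v$P13)^2 + (mm m P24 * (2/(r$P24)^3+lam)) * (v$P24)^2 + (2 * (-sig)) * v$P13 * v$P24)"
      unfolding hH_def sum_pr Pb_def by (simp add: algebra_simps power2_eq_square)
    moreover have "((mm m P12 * (2/(r$P12)^3+lam)) * (v$P12)^2 + (mm m P34 * (2/(r$P34)^3+lam)) * (v$P34)^2 + (2 * sig) * v$P12 * v$P34) \<ge> 0"
      by (rule quad_nonneg[OF pp]) (use C1 in simp)
    moreover have "((mm m P14 * (2/(r$P14)^3+lam)) * (v$P14)^2 + (mm m P23 * (2/(r$P23)^3+lam)) * (v$P23)^2 + (2 * sig) * v$P14 * v$P23) \<ge> 0"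
      by (rule quad_nonneg[OF pp]) (use C2 in simp)
    moreover have "((mm m P13 * (2/(r$P13)^3+lam)) * (v$P13)^2 + (mm m P24 * (2/(r$P24)^3+lam)) * (v$P24)^2 + (2 * (-sig)) * v$P13 * v$P24) \<ge> 0"
      by (rule quad_nonneg[OF pp]) (use C3 in simp)
    ultimately have z1: "((mm m P12 * (2/(r$P12)^3+lam)) * (v$P12)^2 + (mm m P34 * (2/(r$P34)^3+lam)) * (v$P34)^2 + (2 * sig) * v$P12 * v$P34) \<le> 0"
      and z2: "((mm m P14 * (2/(r$P14)^3+lam)) * (v$P14)^2 + (mm m P23 * (2/(r$P23)^3+lam)) * (v$P23)^2 + (2 * sig) * v$P14 * v$P23) \<le> 0"
      and z3: "((mm m P13 * (2/(r$P13)^3+lam)) * (v$P13)^2 + (mm m P24 * (2/(r$P24)^3+lam)) * (v$P24)^2 + (2 * (-sig)) * v$P13 * v$P24) \<le> 0"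
      by linarith+
    have "v$P12 = 0 \<and> v$P34 = 0" using quad_pos[OF pp C1 z1] .
    moreover have "v$P14 = 0 \<and> v$P23 = 0" using quad_pos[OF pp C2 z2] .
    moreover have "v$P13 = 0 \<and> v$P24 = 0" using quad_pos[OF pp C3 z3] .
    ultimately have "v$p = 0" for p by (cases p) auto
    then show "v = 0" by (simp add: vec_eq_iff)
  qed
  show ?thesis unfolding nondeg_local_min_def
    using rM e0pos locmin DL0 nondeg by blast
qed
end
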